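(* Let $X\subseteq\mathbb{R}^d$ be a full-dimensional convex body and let $\lambda>0$ be such that some translate $c+\lambda^{-1}[0,1]^d$ ($c\in\mathbb{R}^d$) is contained in $X$. Then for every real $n>0$, $$\mathrm{Flt}^{\mathbb{R}}_d(X)\le\tfrac1n\,\mathrm{Flt}_d(n\cdot X)\le\tfrac{n+\lambda}{n}\,\mathrm{Flt}^{\mathbb{R}}_d(X).$$ In particular $\frac1n\mathrm{Flt}_d(nX)\to\mathrm{Flt}^{\mathbb{R}}_d(X)$ as $n\to\infty$.
   Context: Convex body: non-empty compact convex subset of $\mathbb{R}^d$; $\mathrm{width}(K)=\min_{u\in(\mathbb{Z}^d)^*\setminus\{0\}}\max_{x,y\in K}|u(x)-u(y)|$. A unimodular (resp. $\mathbb{R}$-unimodular) copy of $Y\subseteq\mathbb{R}^d$ is $\{Ay+b:y\in Y\}$ with $A\in\mathrm{GL}(d,\mathbb{Z})$ and $b\in\mathbb{Z}^d$ (resp. $b\in\mathbb{R}^d$). For bounded $X$: $\mathrm{Flt}_d(X)=\sup\{\mathrm{width}(K): K\text{ convex body not containing a unimodular copy of }X\}$ and $\mathrm{Flt}^{\mathbb{R}}_d(X)=\sup\{\mathrm{width}(K): K\text{ convex body not containing an }\mathbb{R}\text{-unimodular copy of }X\}$. *)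

theory Defs
  imports "HOL-Analysis.Analysis"
begin

text \<open>Dimension d is the cardinality of the finite index type 'n; points of R^d are real^'n.\<close>

definition convex_body :: "(real^'n) set \<Rightarrow> bool" where
  "convex_body K \<longleftrightarrow> K \<noteq> {} \<and> compact K \<and> convex K"

definition int_vec :: "real^'n \<Rightarrow> bool" where
  "int_vec v \<longleftrightarrow> (\<forall>i. v $ i \<in> \<int>)"

text \<open>GL(d,Z): integer matrices with determinant 1 or -1 (i.e. invertible over Z).\<close>
definition GL_int :: "(real^'n^'n) \<Rightarrow> bool" where
  "GL_int A \<longleftrightarrow> (\<forall>i j. A $ i $ j \<in> \<int>) \<and> (det A = 1 \<or> det A = -1)"

text \<open>Lattice width: min over nonzero integer functionals u of max over x,y in K of |u(x)-u(y)|.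
  (For a convex body the infimum/supremum are attained.)\<close>
definition lattice_width :: "(real^'n) set \<Rightarrow> real" where
  "lattice_width K = (INF u \<in> {u. int_vec u \<and> u \<noteq> 0}.
      (SUP p \<in> K \<times> K. \<bar>u \<bullet> fst p - u \<bullet> snd p\<bar>))"

definition unimodular_copy :: "(real^'n^'n) \<Rightarrow> real^'n \<Rightarrow> (real^'n) set \<Rightarrow> (real^'n) set" where
  "unimodular_copy A b Y = (\<lambda>y. A *v y + b) ` Y"

definition contains_unimodular_copy :: "(real^'n) set \<Rightarrow> (real^'n) set \<Rightarrow> bool" where
  "contains_unimodular_copy K Y \<longleftrightarrow>
     (\<exists>A b. GL_int A \<and> int_vec b \<and> unimodular_copy A b Y \<subseteq> K)"

definition contains_R_unimodular_copy :: "(real^'n) set \<Rightarrow> (real^'n) set \<Rightarrow> bool" where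
  "contains_R_unimodular_copy K Y \<longleftrightarrow>
     (\<exists>A b. GL_int A \<and> unimodular_copy A b Y \<subseteq> K)"

text \<open>Flatness constants, as extended reals (the supremum may a priori be infinite).\<close>
definition Flt :: "(real^'n) set \<Rightarrow> ereal" where
  "Flt X = Sup {ereal (lattice_width K) | K. convex_body K \<and> \<not> contains_unimodular_copy K X}"

definition FltR :: "(real^'n) set \<Rightarrow> ereal" where
  "FltR X = Sup {ereal (lattice_width K) | K. convex_body K \<and> \<not> contains_R_unimodular_copy K X}"

end

theory Submission
  imports Defs
begin

lemma bdd_inner:
  fixes K :: "(real^'n) set"
  assumes "compact K"
  shows "bdd_above ((\<lambda>p. \<bar>u \<bullet> fst p - u \<bullet> snd p\<bar>) ` (K \<times> K))"
proof -
  obtain B where B: "\<And>x. x \<in> K \<Longrightarrow> norm x \<le> B"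
    using compact_imp_bounded[OF assms] bounded_iff by blast
  have "\<bar>u \<bullet> fst p - u \<bullet> snd p\<bar> \<le> norm u * (2*B)" if "p \<in> K \<times> K" for p
  proof -
    have "\<bar>u \<bullet> fst p - u \<bullet> snd p\<bar> = \<bar>u \<bullet> (fst p - snd p)\<bar>" by (simp add: inner_diff_right)
    also have "\<dots> \<le> norm u * norm (fst p - snd p)" by (rule Cauchy_Schwarz_ineq2)
    also have "\<dots> \<le> norm u * (norm (fst p) + norm (snd p))"
      by (intro mult_left_mono norm_triangle_ineq4) auto
    also have "\<dots> \<le> norm u * (2*B)"
      using B[of "fst p"] B[of "snd p"] that by (intro mult_left_mono) auto
    finally show ?thesis .
  qed
  then show ?thesis by (auto intro!: bdd_aboveI2)
qed

lemma width_scale: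
  fixes K :: "(real^'n) set"
  assumes "compact K" "K \<noteq> {}" "s > 0"
  shows "lattice_width ((\<lambda>x. s *\<^sub>R x) ` K) = s * lattice_width K"
proof -
  define h where "h u = (SUP p \<in> K \<times> K. \<bar>u \<bullet> fst p - u \<bullet> snd p\<bar>)" for u :: "real^'n"
  have inner: "(SUP p \<in> ((\<lambda>x. s *\<^sub>R x) ` K) \<times> ((\<lambda>x. s *\<^sub>R x) ` K). \<bar>u \<bullet> fst p - u \<bullet> snd p\<bar>)
      = s * h u" for u
  proof -
    have e: "((\<lambda>x. s *\<^sub>R x) ` K) \<times> ((\<lambda>x. s *\<^sub>R x) ` K) = (\<lambda>p. (s *\<^sub>R fst p, s *\<^sub>R snd p)) ` (K \<times> K)"
      by force
    have f: "\<bar>u \<bullet> (s *\<^sub>R a) - u \<bullet> (s *\<^sub>R b)\<bar> = s * \<bar>u \<bullet> a - u \<bullet> b\<bar>" for a b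
      using assms(3) by (simp only: inner_scaleR_right flip: right_diff_distrib) (simp add: abs_mult)
    have f2: "\<bar>s * (u \<bullet> a) - s * (u \<bullet> b)\<bar> = s * \<bar>u \<bullet> a - u \<bullet> b\<bar>" for a b
      using assms(3) by (simp only: flip: right_diff_distrib) (simp add: abs_mult)
    have "(SUP p \<in> ((\<lambda>x. s *\<^sub>R x) ` K) \<times> ((\<lambda>x. s *\<^sub>R x) ` K). \<bar>u \<bullet> fst p - u \<bullet> snd p\<bar>)
       = (SUP p \<in> K \<times> K. s * \<bar>u \<bullet> fst p - u \<bullet> snd p\<bar>)"
      unfolding e image_image by (simp add: f2)
    also have "\<dots> = s * h u"
      unfolding h_def
      apply (subst continuous_at_Sup_mono[where f="\<lambda>t. s * t"])
      using assms bdd_inner[OF assms(1)]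
      by (auto simp: mono_def image_image intro!: continuous_intros)
    finally show ?thesis .
  qed
  have nz: "{u. int_vec u \<and> u \<noteq> (0::real^'n)} \<noteq> {}"
  proof -
    have "int_vec (vec 1 :: real^'n)" "(vec 1 :: real^'n) \<noteq> 0"
      by (auto simp: int_vec_def vec_eq_iff)
    then show ?thesis by blast
  qed
  have hnn: "h u \<ge> 0" for u
  proof -
    obtain x where "x \<in> K" using assms(2) by blast
    then have "\<bar>u \<bullet> fst (x,x) - u \<bullet> snd (x,x)\<bar> \<le> h u"
      unfolding h_def using bdd_inner[OF assms(1)] by (intro cSUP_upper) auto
    then show ?thesis by simp
  qed
  have "lattice_width ((\<lambda>x. s *\<^sub>R x) ` K) = (INF u \<in> {u. int_vec u \<and> u \<noteq> 0}. s * h u)"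
    unfolding lattice_width_def inner ..
  also have "\<dots> = s * (INF u \<in> {u. int_vec u \<and> u \<noteq> 0}. h u)"
    apply (subst continuous_at_Inf_mono[where f="\<lambda>t. s * t"])
    using assms nz hnn
    by (auto simp: mono_def image_image intro!: continuous_intros bdd_belowI2)
  also have "\<dots> = s * lattice_width K" unfolding lattice_width_def h_def ..
  finally show ?thesis .
qed

lemma int_mat_vec:
  fixes A :: "real^'n^'n"
  assumes "\<forall>i j. A $ i $ j \<in> \<int>" "int_vec x"
  shows "int_vec (A *v x)"
  using assms unfolding int_vec_def by (auto simp: matrix_vector_mult_def intro!: Ints_sum Ints_mult)

lemma shift:
  fixes A :: "real^'n^'n"
  assumes "GL_int A"
  shows "\<exists>q. (\<forall>i. 0 \<le> q $ i \<and> q $ i \<le> 1) \<and> int_vec (A *v q + w)"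
proof -
  have "invertible A" using assms by (auto simp: GL_int_def invertible_det_nz)
  then obtain B where AB: "A ** B = mat 1" unfolding invertible_def by blast
  define v where "v = B *v (- w)"
  have Av: "A *v v = - w" unfolding v_def by (simp add: matrix_vector_mul_assoc AB)
  define fl :: "real^'n" where "fl = (\<chi> i. of_int \<lfloor>v $ i\<rfloor>)"
  define q where "q = v - fl"
  have "A *v q + w = - (A *v fl)" unfolding q_def by (simp add: matrix_vector_mult_diff_distrib Av)
  moreover have "int_vec (A *v fl)"
    using assms by (intro int_mat_vec) (auto simp: GL_int_def int_vec_def fl_def)
  then have "int_vec (- (A *v fl))" by (auto simp: int_vec_def)
  moreover have "\<forall>i. 0 \<le> q $ i \<and> q $ i \<le> 1"
    by (auto simp: q_def fl_def) (smt (verit) of_int_floor_le real_of_int_floor_add_one_gt)+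
  ultimately show ?thesis by metis
qed

lemma cb_scale:
  fixes K :: "(real^'n) set"
  assumes "convex_body K"
  shows "convex_body ((\<lambda>x. s *\<^sub>R x) ` K)"
  using assms unfolding convex_body_def by (auto intro: compact_scaling convex_scaling)

lemma lower:
  fixes X :: "(real^'n) set"
  assumes n: "n > 0"
  shows "FltR X \<le> ereal (1 / n) * Flt ((\<lambda>x. n *\<^sub>R x) ` X)"
  unfolding FltR_def
proof (rule Sup_least, clarify)
  fix K :: "(real^'n) set"
  assume K: "convex_body K" "\<not> contains_R_unimodular_copy K X"
  define nK where "nK = (\<lambda>x. n *\<^sub>R x) ` K"
  have cb: "convex_body nK" unfolding nK_def by (rule cb_scale[OF K(1)])
  have nc: "\<not> contains_unimodular_copy nK ((\<lambda>x. n *\<^sub>R x) ` X)"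
  proof
    assume "contains_unimodular_copy nK ((\<lambda>x. n *\<^sub>R x) ` X)"
    then obtain A b where A: "GL_int A" "unimodular_copy A b ((\<lambda>x. n *\<^sub>R x) ` X) \<subseteq> nK"
      unfolding contains_unimodular_copy_def by blast
    have "unimodular_copy A ((1/n) *\<^sub>R b) X \<subseteq> K"
    proof
      fix z assume "z \<in> unimodular_copy A ((1/n) *\<^sub>R b) X"
      then obtain x where x: "x \<in> X" "z = A *v x + (1/n) *\<^sub>R b" unfolding unimodular_copy_def by blast
      have "A *v (n *\<^sub>R x) + b \<in> nK" using A(2) x(1) unfolding unimodular_copy_def by blast
      then obtain y where y: "y \<in> K" "A *v (n *\<^sub>R x) + b = n *\<^sub>R y" unfolding nK_def by blast
      have "z = (1/n) *\<^sub>R (A *v (n *\<^sub>R x) + b)"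
        using n x(2) by (simp add: matrix_vector_mult_scaleR scaleR_add_right)
      also have "\<dots> = y" using y(2) n by simp
      finally show "z \<in> K" using y(1) by simp
    qed
    then show False using K(2) A(1) unfolding contains_R_unimodular_copy_def by blast
  qed
  have le: "ereal (lattice_width nK) \<le> Flt ((\<lambda>x. n *\<^sub>R x) ` X)"
    unfolding Flt_def using cb nc by (intro Sup_upper) blast
  have w: "lattice_width nK = n * lattice_width K"
    unfolding nK_def using K(1) n by (intro width_scale) (auto simp: convex_body_def)
  have "ereal (lattice_width K) = ereal (1/n) * ereal (lattice_width nK)"
    using n w by simp
  also have "\<dots> \<le> ereal (1/n) * Flt ((\<lambda>x. n *\<^sub>R x) ` X)"
    using n le by (intro ereal_mult_left_mono) auto
  finally show "ereal (lattice_width K) \<le> ereal (1 / n) * Flt ((\<lambda>x. n *\<^sub>R x) ` X)" .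
qed

lemma upper:
  fixes X :: "(real^'n) set" and c :: "real^'n"
  assumes cX: "convex X" and n: "n > 0" and lam: "lam > 0"
    and cube: "{c + (1 / lam) *\<^sub>R x | x. \<forall>i. 0 \<le> x $ i \<and> x $ i \<le> 1} \<subseteq> X"
  shows "Flt ((\<lambda>x. n *\<^sub>R x) ` X) \<le> ereal (n + lam) * FltR X"
  unfolding Flt_def
proof (rule Sup_least, clarify)
  fix K :: "(real^'n) set"
  assume K: "convex_body K" "\<not> contains_unimodular_copy K ((\<lambda>x. n *\<^sub>R x) ` X)"
  define s where "s = n + lam"
  have s: "s > 0" using n lam by (simp add: s_def)
  define K' where "K' = (\<lambda>x. (1/s) *\<^sub>R x) ` K"
  have cb: "convex_body K'" unfolding K'_def by (rule cb_scale[OF K(1)])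
  have nc: "\<not> contains_R_unimodular_copy K' X"
  proof
    assume "contains_R_unimodular_copy K' X"
    then obtain A b where A: "GL_int A" "unimodular_copy A b X \<subseteq> K'"
      unfolding contains_R_unimodular_copy_def by blast
    obtain q where q: "\<forall>i. 0 \<le> q $ i \<and> q $ i \<le> 1" "int_vec (A *v q + (A *v (lam *\<^sub>R c) + s *\<^sub>R b))"
      using shift[OF A(1)] by blast
    define t where "t = A *v q + (A *v (lam *\<^sub>R c) + s *\<^sub>R b)"
    have cq: "c + (1/lam) *\<^sub>R q \<in> X" using cube q(1) by blast
    have "unimodular_copy A t ((\<lambda>x. n *\<^sub>R x) ` X) \<subseteq> K"
    proof
      fix z assume "z \<in> unimodular_copy A t ((\<lambda>x. n *\<^sub>R x) ` X)"
      then obtain x where x: "x \<in> X" "z = A *v (n *\<^sub>R x) + t" unfolding unimodular_copy_def by blast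
      define x2 where "x2 = (n/s) *\<^sub>R x + (lam/s) *\<^sub>R (c + (1/lam) *\<^sub>R q)"
      have x2X: "x2 \<in> X" unfolding x2_def
        using convexD[OF cX x(1) cq, of "n/s" "lam/s"] n lam s by (simp add: s_def flip: add_divide_distrib)
      have "A *v x2 + b \<in> K'" using A(2) x2X unfolding unimodular_copy_def by blast
      then obtain y where y: "y \<in> K" "A *v x2 + b = (1/s) *\<^sub>R y" unfolding K'_def by blast
      have sx2: "s *\<^sub>R x2 = n *\<^sub>R x + lam *\<^sub>R c + q"
        unfolding x2_def using s lam by (simp add: scaleR_add_right)
      have "z = s *\<^sub>R (A *v x2 + b)"
        unfolding x(2) t_def
        by (simp add: scaleR_add_right matrix_vector_mult_scaleR[symmetric] sx2 matrix_vector_right_distrib)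
      also have "\<dots> = y" using y(2) s by simp
      finally show "z \<in> K" using y(1) by simp
    qed
    moreover have "int_vec t" using q(2) by (simp add: t_def)
    ultimately show False using K(2) A(1) unfolding contains_unimodular_copy_def by blast
  qed
  have le: "ereal (lattice_width K') \<le> FltR X"
    unfolding FltR_def using cb nc by (intro Sup_upper) blast
  have KK: "(\<lambda>x. s *\<^sub>R x) ` K' = K" unfolding K'_def image_image using s by simp
  have w: "lattice_width K = s * lattice_width K'"
    using width_scale[of K' s] cb s KK by (auto simp: convex_body_def)
  have "ereal (lattice_width K) = ereal s * ereal (lattice_width K')"
    using w by simp
  also have "\<dots> \<le> ereal s * FltR X"
    using s le by (intro ereal_mult_left_mono) auto
  finally show "ereal (lattice_width K) \<le> ereal (n + lam) * FltR X" by (simp add: s_def)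
qed

theorem mainTheorem9:
  fixes X :: "(real^'n) set" and lam :: real and c :: "real^'n"
  assumes "convex_body X"
    and "interior X \<noteq> {}"
    and "lam > 0"
    and "{c + (1 / lam) *\<^sub>R x | x. \<forall>i. 0 \<le> x $ i \<and> x $ i \<le> 1} \<subseteq> X"
  shows "(\<forall>n::real. n > 0 \<longrightarrow>
            FltR X \<le> ereal (1 / n) * Flt ((\<lambda>x. n *\<^sub>R x) ` X)
          \<and> ereal (1 / n) * Flt ((\<lambda>x. n *\<^sub>R x) ` X) \<le> ereal ((n + lam) / n) * FltR X)
       \<and> ((\<lambda>n::real. ereal (1 / n) * Flt ((\<lambda>x. n *\<^sub>R x) ` X)) \<longlongrightarrow> FltR X) at_top"
proof -
  define g where "g n = ereal (1 / n) * Flt ((\<lambda>x. n *\<^sub>R x) ` X)" for n :: real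
  have cX: "convex X" using assms(1) by (simp add: convex_body_def)
  have B: "FltR X \<le> g n \<and> g n \<le> ereal ((n + lam) / n) * FltR X" if n: "n > 0" for n
  proof
    show "FltR X \<le> g n" unfolding g_def by (rule lower[OF n])
    have "g n \<le> ereal (1/n) * (ereal (n + lam) * FltR X)"
      unfolding g_def using n upper[OF cX n assms(3,4)] by (intro ereal_mult_left_mono) auto
    also have "\<dots> = ereal ((n + lam) / n) * FltR X"
      by (simp add: mult.assoc[symmetric])
    finally show "g n \<le> ereal ((n + lam) / n) * FltR X" .
  qed
  have ev: "eventually (\<lambda>n. FltR X \<le> g n \<and> g n \<le> ereal ((n + lam) / n) * FltR X) at_top"
    using eventually_gt_at_top[of "0::real"] by (rule eventually_mono) (rule B)
  have lim: "(g \<longlongrightarrow> FltR X) at_top"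
  proof (cases "FltR X")
    case (real f)
    have "((\<lambda>n::real. (n + lam) / n * f) \<longlongrightarrow> f) at_top"
    proof -
      have "((\<lambda>n::real. f + lam * f * (1 / n)) \<longlongrightarrow> f + lam * f * 0) at_top"
        by (intro tendsto_intros tendsto_divide_0[OF tendsto_const] filterlim_at_top_imp_at_infinity filterlim_ident)
      then have l: "((\<lambda>n::real. f + lam * f * (1 / n)) \<longlongrightarrow> f) at_top" by simp
      have e: "eventually (\<lambda>n::real. f + lam * f * (1 / n) = (n + lam) / n * f) at_top"
        using eventually_gt_at_top[of "0::real"] by (rule eventually_mono) (simp add: field_simps)
      show ?thesis by (rule Lim_transform_eventually[OF l e])
    qed
    then have u: "((\<lambda>n::real. ereal ((n + lam) / n) * FltR X) \<longlongrightarrow> FltR X) at_top"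
      using real by (simp add: tendsto_ereal)
    show ?thesis
      using ev real by (intro tendsto_sandwich[OF _ _ tendsto_const u]) (auto elim: eventually_mono)
  next
    case PInf
    have "eventually (\<lambda>n. g n = FltR X) at_top"
      using ev PInf by (auto elim: eventually_mono)
    then show ?thesis by (rule tendsto_eventually)
  next
    case MInf
    have "eventually (\<lambda>n. g n = FltR X) at_top"
      using eventually_gt_at_top[of "0::real"]
    proof (rule eventually_mono)
      fix n :: real assume n: "n > 0"
      then have "g n \<le> ereal ((n + lam) / n) * FltR X" using B by blast
      also have "\<dots> = - \<infinity>" using MInf n assms(3) by simp
      finally show "g n = FltR X" using MInf by simp
    qed
    then show ?thesis by (rule tendsto_eventually)
  qed
  show ?thesis using B lim unfolding g_def by blast
qed

end
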